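(* Let $T_1,T_2$ be standard tableaux. If $T_1'$ is a term of $\mathbb B_2^{(0)}T_1$ and $T_2'$ is a term of $\mathbb B_2^{(1)}T_2$, then $\overset{*}{\mathbb B}{}_2^{(0)}T_1'=T_1$ and $\overset{*}{\mathbb B}{}_2^{(1)}T_2'=T_2$.
   Context: Tableaux (French convention: rows of lengths $\lambda_1\ge\lambda_2\ge\cdots$ from bottom to top). A tableau is identified with (shape, reading word), the reading word listing the entries row by row from top row to bottom row, each row left to right; word operators act on tableaux via reading words, keeping the shape. Standard tableau of degree $n$: rows increase left to right, columns increase upwards, entries $1,\dots,n$ each once. $T^t$ is the transpose (reflection of diagram and entries across the main diagonal). Word operators (compositions act right to left): $\tau_k$ adds $k$ to every letter; $r_{(ab\to cd)}$ applies to a word whose letters in $\{a,b\}$ are, left to right, exactly $a$ then $b$ (if $a=b$: exactly two occurrences of $a$), and replaces the first by $c$ and the second by $d$; $R_a$ deletes all letters (cells) equal to $a$; for a word with $(\mathrm{ev}_a,\mathrm{ev}_{a+1})\in\{(1,2),(2,1)\}$ ($\mathrm{ev}_i$ = number of occurrences of $i$), $\sigma_a$ replaces the subword of letters in $\{a,b\}$, $b=a+1$, in place, via $aab\leftrightarrow abb$, $aba\leftrightarrow bba$, $baa\leftrightarrow bab$. For a tableau $T$ of degree $n$, $A_{n+1,n+1}T$ is the sum of all tableaux obtained by adding two cells containing $n+1$ so that the new shape is a partition diagram and the two new cells lie in different columns. Operators and transposition extend linearly to $\mathbb Z$-linear combinations of tableaux. For standard $T$ of degree $n$: $\mathbb B_2^{(0)}T=\tau_1r_{(11\to01)}\sigma_1\sigma_2\cdots\sigma_nA_{n+1,n+1}T$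 and $\mathbb B_2^{(1)}T=(\mathbb B_2^{(0)}T^t)^t$ (sums of distinct standard tableaux). For a standard tableau $T$ of degree $n\ge2$ in which $1$ precedes $2$ in the reading word, $\overset{*}{\mathbb B}{}_2^{(0)}T=R_{n-1}\sigma_{n-2}\cdots\sigma_1r_{(01\to11)}\tau_{-1}T$; for a standard $T$ of degree $n\ge2$ in which $2$ precedes $1$, $\overset{*}{\mathbb B}{}_2^{(1)}T=(\overset{*}{\mathbb B}{}_2^{(0)}T^t)^t$. *)

theory Defs
  imports Main
begin

(* A tableau (French convention) is the list of its rows, bottom row first;
   each row is listed left to right.  Entries are integers. *)
type_synonym tab = "int list list"

definition partition_shape :: "tab \<Rightarrow> bool" where
  "partition_shape T \<longleftrightarrow> (\<forall>r\<in>set T. r \<noteq> []) \<and>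
     (\<forall>i. Suc i < length T \<longrightarrow> length (T ! Suc i) \<le> length (T ! i))"

definition rw :: "tab \<Rightarrow> int list" where
  "rw T = concat (rev T)"

definition deg :: "tab \<Rightarrow> nat" where
  "deg T = length (rw T)"

definition rowlen :: "tab \<Rightarrow> nat \<Rightarrow> nat" where
  "rowlen T i = (if i < length T then length (T ! i) else 0)"

definition standard :: "tab \<Rightarrow> bool" where
  "standard T \<longleftrightarrow> partition_shape T \<and>
     (\<forall>i<length T. sorted_wrt (<) (T ! i)) \<and>
     (\<forall>i j. Suc i < length T \<and> j < length (T ! Suc i) \<longrightarrow> T ! i ! j < T ! Suc i ! j) \<and>
     distinct (rw T) \<and> set (rw T) = {1 .. int (deg T)}"

definition transp_tab :: "tab \<Rightarrow> tab" where
  "transp_tab T = map (\<lambda>j. map (\<lambda>i. T ! i ! j) [0..< length (filter (\<lambda>r. j < length r) T)])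
       [0..< (if T = [] then 0 else length (hd T))]"

fun split_by :: "nat list \<Rightarrow> 'a list \<Rightarrow> 'a list list" where
  "split_by [] w = []"
| "split_by (l # ls) w = take l w # split_by ls (drop l w)"

(* the tableau of the same shape as T with reading word w *)
definition fill :: "tab \<Rightarrow> int list \<Rightarrow> tab" where
  "fill T w = rev (split_by (rev (map length T)) w)"

(* word operators; None = operator not applicable *)
definition tau :: "int \<Rightarrow> int list \<Rightarrow> int list option" where
  "tau k w = Some (map (\<lambda>x. x + k) w)"

fun rpl :: "int \<Rightarrow> int \<Rightarrow> int \<Rightarrow> int \<Rightarrow> int list \<Rightarrow> int list" where
  "rpl a b c d [] = []"
| "rpl a b c d (x # xs) = (if x = a \<or> x = b
      then c # map (\<lambda>y. if y = a \<or> y = b then d else y) xs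
      else x # rpl a b c d xs)"

definition rop :: "int \<Rightarrow> int \<Rightarrow> int \<Rightarrow> int \<Rightarrow> int list \<Rightarrow> int list option" where
  "rop a b c d w = (if filter (\<lambda>x. x = a \<or> x = b) w = [a, b] then Some (rpl a b c d w) else None)"

fun subst_in :: "(int \<Rightarrow> bool) \<Rightarrow> int list \<Rightarrow> int list \<Rightarrow> int list" where
  "subst_in P [] vs = []"
| "subst_in P (x # xs) vs = (if P x then hd vs # subst_in P xs (tl vs) else x # subst_in P xs vs)"

definition sig_sub :: "int \<Rightarrow> int list \<Rightarrow> int list" where
  "sig_sub a u = (let b = a + 1 in
     if u = [a,a,b] then [a,b,b] else if u = [a,b,b] then [a,a,b]
     else if u = [a,b,a] then [b,b,a] else if u = [b,b,a] then [a,b,a]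
     else if u = [b,a,a] then [b,a,b] else if u = [b,a,b] then [b,a,a] else u)"

definition ev :: "int \<Rightarrow> int list \<Rightarrow> nat" where
  "ev i w = length (filter (\<lambda>x. x = i) w)"

definition sigma :: "int \<Rightarrow> int list \<Rightarrow> int list option" where
  "sigma a w = (if (ev a w, ev (a + 1) w) \<in> {(1,2),(2,1)}
     then Some (subst_in (\<lambda>x. x = a \<or> x = a + 1) w (sig_sub a (filter (\<lambda>x. x = a \<or> x = a + 1) w)))
     else None)"

(* sigs_down k = sigma_1 \<circ> sigma_2 \<circ> ... \<circ> sigma_k  (sigma_k applied first) *)
fun sigs_down :: "nat \<Rightarrow> int list \<Rightarrow> int list option" where
  "sigs_down 0 w = Some w"
| "sigs_down (Suc k) w = Option.bind (sigma (int (Suc k)) w) (sigs_down k)"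

(* sigs_up k = sigma_k \<circ> ... \<circ> sigma_1  (sigma_1 applied first) *)
fun sigs_up :: "nat \<Rightarrow> int list \<Rightarrow> int list option" where
  "sigs_up 0 w = Some w"
| "sigs_up (Suc k) w = Option.bind (sigs_up k w) (sigma (int (Suc k)))"

definition Rdel :: "int \<Rightarrow> tab \<Rightarrow> tab" where
  "Rdel a T = filter (\<lambda>r. r \<noteq> []) (map (filter (\<lambda>x. x \<noteq> a)) T)"

(* terms of A_{n+1,n+1} T, n = deg T *)
definition Aterms :: "tab \<Rightarrow> tab set" where
  "Aterms T = {T'. partition_shape T' \<and> deg T' = deg T + 2 \<and> length T \<le> length T' \<and>
     (\<forall>i<length T. take (length (T ! i)) (T' ! i) = T ! i) \<and>
     (\<forall>i<length T'. \<forall>j<length (T' ! i). rowlen T i \<le> j \<longrightarrow> T' ! i ! j = int (deg T) + 1) \<and>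
     (\<forall>i1<length T'. \<forall>i2<length T'. \<forall>j.
        rowlen T i1 \<le> j \<and> j < length (T' ! i1) \<and> rowlen T i2 \<le> j \<and> j < length (T' ! i2)
        \<longrightarrow> i1 = i2)}"

definition B0 :: "tab \<Rightarrow> tab set" where
  "B0 T = {T''. \<exists>T'\<in>Aterms T. \<exists>w.
     Option.bind (sigs_down (deg T) (rw T')) (\<lambda>v. Option.bind (rop 1 1 0 1 v) (tau 1)) = Some w
     \<and> T'' = fill T' w}"

definition B1 :: "tab \<Rightarrow> tab set" where
  "B1 T = transp_tab ` B0 (transp_tab T)"

definition precedes :: "int \<Rightarrow> int \<Rightarrow> int list \<Rightarrow> bool" where
  "precedes a b w \<longleftrightarrow> (\<exists>i j. i < j \<and> j < length w \<and> w ! i = a \<and> w ! j = b)"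

(* starred B_2^(0); None if T is outside its domain *)
definition Bstar0 :: "tab \<Rightarrow> tab option" where
  "Bstar0 T = (if standard T \<and> 2 \<le> deg T \<and> precedes 1 2 (rw T)
     then map_option (\<lambda>w. Rdel (int (deg T) - 1) (fill T w))
       (Option.bind (Option.bind (tau (-1) (rw T)) (rop 0 1 1 1)) (sigs_up (deg T - 2)))
     else None)"

definition Bstar1 :: "tab \<Rightarrow> tab option" where
  "Bstar1 T = (if standard T \<and> 2 \<le> deg T \<and> precedes 2 1 (rw T)
     then map_option transp_tab (Bstar0 (transp_tab T)) else None)"

end

theory Submission
  imports Defs "HOL-Library.Multiset"
begin


lemma map_length_split_by:
  "length w = sum_list ls \<Longrightarrow> map length (split_by ls w) = ls"
  by (induction ls arbitrary: w) (auto simp: min_def)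

lemma concat_split_by:
  "length w = sum_list ls \<Longrightarrow> concat (split_by ls w) = w"
  by (induction ls arbitrary: w) auto

lemma split_by_concat: "split_by (map length xs) (concat xs) = xs"
  by (induction xs) auto

lemma deg_sum: "deg T = sum_list (map length T)"
  by (simp add: deg_def rw_def length_concat rev_map[symmetric] sum_list_rev)

lemma fill_shape: "length w = deg T \<Longrightarrow> map length (fill T w) = map length T"
proof -
  assume "length w = deg T"
  then have "length w = sum_list (map length (rev T))" by (simp add: deg_sum rev_map[symmetric] sum_list_rev)
  then have "map length (split_by (map length (rev T)) w) = map length (rev T)" by (rule map_length_split_by)
  then show ?thesis unfolding fill_def by (simp add: rev_map[symmetric])
qed

lemma rw_fill: "length w = deg T \<Longrightarrow> rw (fill T w) = w"
  unfolding fill_def rw_def by (simp add: concat_split_by deg_sum sum_list_rev)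

lemma fill_rw: "fill T (rw T) = T"
  unfolding fill_def rw_def by (metis rev_map rev_rev_ident split_by_concat)

lemma fill_cong: "map length A = map length B \<Longrightarrow> fill A w = fill B w"
  unfolding fill_def by simp

lemma tab_eqI: "map length A = map length B \<Longrightarrow> rw A = rw B \<Longrightarrow> A = B"
  by (metis fill_cong fill_rw)

definition posn :: "nat list \<Rightarrow> nat \<Rightarrow> nat \<Rightarrow> nat" where
  "posn sh i j = sum_list (drop (Suc i) sh) + j"

definition cellsn :: "nat list \<Rightarrow> (nat \<times> nat) set" where
  "cellsn sh = {(i,j). i < length sh \<and> j < sh ! i}"

lemma sum_drop_split: "i < length sh \<Longrightarrow> sum_list (drop i sh) = sh ! i + sum_list (drop (Suc i) sh)"
  by (simp add: Cons_nth_drop_Suc[symmetric])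

lemma sum_drop_mono: "i \<le> i' \<Longrightarrow> sum_list (drop i' (sh::nat list)) \<le> sum_list (drop i sh)"
proof -
  assume "i \<le> i'"
  then have "drop i' sh = drop (i' - i) (drop i sh)" by simp
  moreover have "sum_list (drop k ys) \<le> sum_list ys" for k and ys :: "nat list"
    by (metis append_take_drop_id le_add2 sum_list_append)
  ultimately show ?thesis by metis
qed

lemma posn_lt: "i < length sh \<Longrightarrow> j < sh ! i \<Longrightarrow> posn sh i j < sum_list (drop i sh)"
  by (simp add: posn_def sum_drop_split)

lemma posn_bound: "i < length sh \<Longrightarrow> j < sh ! i \<Longrightarrow> posn sh i j < sum_list sh"
  using posn_lt[of i sh j] sum_drop_mono[of 0 i sh] by simp

lemma posn_less_row: "i' < i \<Longrightarrow> i < length sh \<Longrightarrow> j < sh ! i \<Longrightarrow> posn sh i j < posn sh i' j'"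
proof -
  assume a: "i' < i" "i < length sh" "j < sh ! i"
  have "posn sh i j < sum_list (drop i sh)" using a posn_lt by simp
  also have "\<dots> \<le> sum_list (drop (Suc i') sh)" using a sum_drop_mono by simp
  also have "\<dots> \<le> posn sh i' j'" by (simp add: posn_def)
  finally show ?thesis .
qed

lemma posn_less_iff:
  assumes "(i,j) \<in> cellsn sh" "(i',j') \<in> cellsn sh"
  shows "posn sh i j < posn sh i' j' \<longleftrightarrow> (i' < i \<or> (i = i' \<and> j < j'))"
  using assms posn_less_row[of i' i sh j j'] posn_less_row[of i i' sh j' j]
  by (cases "i' < i"; cases "i < i'"; auto simp: cellsn_def posn_def)

lemma posn_inj: "inj_on (\<lambda>(i,j). posn sh i j) (cellsn sh)"
proof (rule inj_onI, clarify)
  fix i j i' j' assume c: "(i,j) \<in> cellsn sh" "(i',j') \<in> cellsn sh" and e: "posn sh i j = posn sh i' j'"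
  show "i = i' \<and> j = j'"
    using posn_less_iff[OF c] posn_less_iff[OF c(2) c(1)] e by (metis less_irrefl nat_neq_iff)
qed

lemma posn_surj: "p < sum_list sh \<Longrightarrow> \<exists>i j. (i,j) \<in> cellsn sh \<and> posn sh i j = p"
proof (induction sh arbitrary: p)
  case Nil then show ?case by simp
next
  case (Cons x sh)
  show ?case
  proof (cases "p < sum_list sh")
    case True
    then obtain i j where "(i,j) \<in> cellsn sh" "posn sh i j = p" using Cons.IH by blast
    then show ?thesis
      by (intro exI[of _ "Suc i"] exI[of _ j]) (auto simp: cellsn_def posn_def)
  next
    case False
    then show ?thesis using Cons.prems
      by (intro exI[of _ 0] exI[of _ "p - sum_list sh"]) (auto simp: cellsn_def posn_def)
  qed
qed

lemma posn_image: "(\<lambda>(i,j). posn sh i j) ` cellsn sh = {..<sum_list sh}"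
  using posn_surj[of _ sh] posn_bound[of _ sh] by (fastforce simp: cellsn_def)

lemma posn_bij: "bij_betw (\<lambda>(i,j). posn sh i j) (cellsn sh) {..<sum_list sh}"
  using posn_inj posn_image by (simp add: bij_betw_def)

lemma rw_nth: "i < length T \<Longrightarrow> j < length (T ! i) \<Longrightarrow> rw T ! posn (map length T) i j = T ! i ! j"
proof -
  assume a: "i < length T" "j < length (T ! i)"
  have "T = take i T @ T ! i # drop (Suc i) T" using a by (simp add: id_take_nth_drop)
  then have "rw T = concat (rev (drop (Suc i) T)) @ T ! i @ concat (rev (take i T))"
    unfolding rw_def by (metis append.assoc concat.simps(2) concat_append rev.simps(2) rev_append concat.simps(1) append_Nil2)
  moreover have "length (concat (rev (drop (Suc i) T))) = sum_list (drop (Suc i) (map length T))"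
    by (simp add: length_concat rev_map[symmetric] sum_list_rev drop_map)
  ultimately show ?thesis using a by (simp add: posn_def nth_append)
qed

lemma fill_nth: "length w = deg T \<Longrightarrow> i < length T \<Longrightarrow> j < length (T ! i) \<Longrightarrow>
   fill T w ! i ! j = w ! posn (map length T) i j"
proof -
  assume a: "length w = deg T" "i < length T" "j < length (T ! i)"
  have s: "map length (fill T w) = map length T" using fill_shape a by simp
  then have "length (fill T w) = length T" by (metis length_map)
  moreover have "length (fill T w ! i) = length (T ! i)" using s a
    by (metis \<open>length (fill T w) = length T\<close> nth_map)
  ultimately show ?thesis using rw_nth[of i "fill T w" j] a s rw_fill by simp
qed



definition ix :: "('a \<Rightarrow> bool) \<Rightarrow> 'a list \<Rightarrow> nat \<Rightarrow> nat" where
  "ix P w p = length (filter P (take p w))"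

lemma length_subst_in: "length (subst_in P w vs) = length w"
  by (induction P w vs rule: subst_in.induct) auto

lemma subst_in_nth:
  "length vs = length (filter P w) \<Longrightarrow> p < length w \<Longrightarrow>
   subst_in P w vs ! p = (if P (w ! p) then vs ! ix P w p else w ! p)"
proof (induction w arbitrary: vs p)
  case Nil then show ?case by simp
next
  case (Cons x xs)
  show ?case
  proof (cases p)
    case 0 then show ?thesis using Cons.prems by (cases vs) (auto simp: ix_def)
  next
    case (Suc p')
    show ?thesis
    proof (cases "P x")
      case True
      then have "length (tl vs) = length (filter P xs)" using Cons.prems by simp
      then show ?thesis using Cons.IH[of "tl vs" p'] Cons.prems True Suc
        by (cases vs) (auto simp: ix_def)
    next
      case False
      then show ?thesis using Cons.IH[of vs p'] Cons.prems Suc by (auto simp: ix_def)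
    qed
  qed
qed

lemma filter_nth_ix: "p < length w \<Longrightarrow> P (w ! p) \<Longrightarrow> filter P w ! ix P w p = w ! p"
proof -
  assume a: "p < length w" "P (w ! p)"
  have "w = take p w @ w ! p # drop (Suc p) w" using a by (simp add: id_take_nth_drop)
  then have "filter P w = filter P (take p w) @ w ! p # filter P (drop (Suc p) w)"
    using a by (metis filter.simps(2) filter_append)
  then show ?thesis by (simp add: ix_def nth_append)
qed

lemma ix_Suc: "p < length w \<Longrightarrow> ix P w (Suc p) = ix P w p + (if P (w ! p) then 1 else 0)"
  by (simp add: ix_def take_Suc_conv_app_nth)

lemma ix_mono: "p \<le> p' \<Longrightarrow> ix P w p \<le> ix P w p'"
proof -
  assume "p \<le> p'"
  then have "take p w = take p (take p' w)" by (simp add: min_def)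
  moreover have "length (filter P (take p ys)) \<le> length (filter P ys)" for ys :: "'a list"
    by (metis append_take_drop_id filter_append le_add1 length_append)
  ultimately show ?thesis unfolding ix_def by metis
qed

lemma ix_strict: "p < p' \<Longrightarrow> p' \<le> length w \<Longrightarrow> P (w ! p) \<Longrightarrow> ix P w p < ix P w p'"
  using ix_Suc[of p w P] ix_mono[of "Suc p" p' P w] by simp

lemma ix_less_len: "p < length w \<Longrightarrow> P (w ! p) \<Longrightarrow> ix P w p < length (filter P w)"
  using ix_strict[of p "length w" w P] by (simp add: ix_def)

lemma ix_inj: "p < length w \<Longrightarrow> p' < length w \<Longrightarrow> P (w ! p) \<Longrightarrow> P (w ! p') \<Longrightarrow>
  ix P w p = ix P w p' \<Longrightarrow> p = p'"
  by (metis ix_strict less_imp_le_nat less_irrefl nat_neq_iff)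

lemma ix_exists: "k < length (filter P w) \<Longrightarrow> \<exists>q < length w. P (w ! q) \<and> ix P w q = k"
proof (induction w arbitrary: k)
  case Nil then show ?case by simp
next
  case (Cons x xs)
  show ?case
  proof (cases "P x")
    case True
    show ?thesis
    proof (cases k)
      case 0 then show ?thesis using True by (intro exI[of _ 0]) (auto simp: ix_def)
    next
      case (Suc k')
      then obtain q where "q < length xs" "P (xs ! q)" "ix P xs q = k'"
        using Cons True by auto
      then show ?thesis using True Suc by (intro exI[of _ "Suc q"]) (auto simp: ix_def)
    qed
  next
    case False
    then obtain q where "q < length xs" "P (xs ! q)" "ix P xs q = k"
      using Cons by auto
    then show ?thesis using False by (intro exI[of _ "Suc q"]) (auto simp: ix_def)
  qed
qed

lemma subst_in_update:
  assumes "q < length w" "P (w ! q)"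
  shows "subst_in P w ((filter P w)[ix P w q := x]) = w[q := x]"
proof (rule nth_equalityI)
  show "length (subst_in P w ((filter P w)[ix P w q := x])) = length (w[q := x])"
    by (simp add: length_subst_in)
next
  fix p assume "p < length (subst_in P w ((filter P w)[ix P w q := x]))"
  then have p: "p < length w" by (simp add: length_subst_in)
  show "subst_in P w ((filter P w)[ix P w q := x]) ! p = w[q := x] ! p"
    using subst_in_nth[of "(filter P w)[ix P w q := x]" P w p] p assms
      ix_inj[of p w q P] ix_less_len[of p w P] filter_nth_ix[of p w P]
  proof (cases "p = q")
    case False
    then show ?thesis using subst_in_nth[of "(filter P w)[ix P w q := x]" P w p] p assms
      ix_inj[of p w q P] ix_less_len[of p w P] filter_nth_ix[of p w P]
      by (cases "P (w ! p)") (simp_all, metis nth_list_update_neq)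
  qed (use p assms subst_in_nth[of "(filter P w)[ix P w q := x]" P w p] ix_less_len[of q w P] in simp)
qed

lemma filter_update:
  assumes "q < length w" "P (w ! q)" "P x"
  shows "filter P (w[q := x]) = (filter P w)[ix P w q := x]"
proof -
  have w: "w = take q w @ w ! q # drop (Suc q) w" using assms by (simp add: id_take_nth_drop)
  have "w[q := x] = take q w @ x # drop (Suc q) w" using assms by (simp add: upd_conv_take_nth_drop)
  moreover have "filter P w = filter P (take q w) @ w ! q # filter P (drop (Suc q) w)"
    using assms w by (metis filter.simps(2) filter_append)
  ultimately show ?thesis using assms by (simp add: ix_def list_update_append)
qed

lemma ix_update: "q < length w \<Longrightarrow> ix P (w[q := x]) q = ix P w q"
  by (simp add: ix_def)

lemma ev_count: "ev i w = count (mset w) i"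
  by (induction w) (auto simp: ev_def)

lemma count_pos: "count (mset (w::int list)) x = card {p. p < length w \<and> w ! p = x}"
  using ev_count[of x w] by (simp add: ev_def length_filter_conv_card)

lemma count_two:
  "p < length (w::int list) \<Longrightarrow> p' < length w \<Longrightarrow> p \<noteq> p' \<Longrightarrow> w ! p = x \<Longrightarrow> w ! p' = x \<Longrightarrow> 2 \<le> count (mset w) x"
proof -
  assume a: "p < length w" "p' < length w" "p \<noteq> p'" "w ! p = x" "w ! p' = x"
  have "{p, p'} \<subseteq> {p. p < length w \<and> w ! p = x}" using a by auto
  then have "card {p, p'} \<le> card {p. p < length w \<and> w ! p = x}" by (intro card_mono) auto
  then show ?thesis using a by (simp add: count_pos card_insert_if)
qed



lemma perm3:
  assumes "mset [x,y,z] = {#a, b, b#}" "a \<noteq> (b::int)"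
  shows "[x,y,z] = [a,b,b] \<or> [x,y,z] = [b,a,b] \<or> [x,y,z] = [b,b,a]"
proof -
  have "count (mset [x,y,z]) a = 1" "count (mset [x,y,z]) b = 2" "size (mset [x,y,z]) = 3"
    using assms by simp_all
  have s: "set [x,y,z] = {a,b}" using assms by (metis set_mset_mset set_mset_add_mset_insert set_mset_empty insert_absorb2 insert_commute)
  then have "x \<in> {a,b}" "y \<in> {a,b}" "z \<in> {a,b}" by auto
  then show ?thesis using \<open>count (mset [x,y,z]) a = 1\<close> assms(2) by (auto split: if_splits)
qed

lemma case3_aux: "a \<noteq> (b::int) \<Longrightarrow> \<forall>t. 0 < t \<and> t < 3 \<and> [b,b,a] ! t = a \<longrightarrow> (\<exists>t2. 0 < t2 \<and> t2 < t \<and> [b,b,a] ! t2 = b)"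
proof (intro allI impI)
  fix t assume "a \<noteq> b" "0 < t \<and> t < 3 \<and> [b,b,a] ! t = a"
  then have "t = 2" by (cases t; cases "t - 1"; auto)
  then show "\<exists>t2. 0 < t2 \<and> t2 < t \<and> [b,b,a] ! t2 = b" by (intro exI[of _ 1]) simp
qed

lemma sigma_step:
  fixes w :: "int list" and a :: int
  assumes ca: "count (mset w) a = 1" and cb: "count (mset w) (a+1) = 2"
  shows "\<exists>q < length w. w ! q = a+1 \<and> sigma a w = Some (w[q:=a]) \<and> sigma a (w[q:=a]) = Some w \<and>
     (0 < q \<longrightarrow> w ! (q-1) \<noteq> a+1) \<and>
     (\<forall>p. q < p \<and> p < length w \<and> w ! p = a \<longrightarrow> (\<exists>p2. q < p2 \<and> p2 < p \<and> w ! p2 = a+1))"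
proof -
  define b where "b = a + 1"
  define P where "P = (\<lambda>x::int. x = a \<or> x = a + 1)"
  define u where "u = filter P w"
  have ab: "a \<noteq> b" by (simp add: b_def)
  have mu: "mset u = {#a, b, b#}"
  proof (rule multiset_eqI)
    fix x
    show "count (mset u) x = count {#a, b, b#} x"
      using ca cb ab by (auto simp: u_def P_def b_def)
  qed
  then have "length u = 3" by (metis size_mset size_add_mset size_empty numeral_3_eq_3)
  then obtain x y z where xyz: "u = [x,y,z]"
    by (metis (no_types) length_0_conv length_Suc_conv numeral_3_eq_3)
  have cases: "u = [a,b,b] \<or> u = [b,a,b] \<or> u = [b,b,a]" using perm3[of x y z a b] mu xyz ab by simp
  obtain k where k: "k < 3" "sig_sub a u = u[k := a]" "u ! k = b" "sig_sub a (u[k := a]) = u"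
     "0 < k \<longrightarrow> u ! (k-1) \<noteq> b"
     "\<forall>t. k < t \<and> t < 3 \<and> u ! t = a \<longrightarrow> (\<exists>t2. k < t2 \<and> t2 < t \<and> u ! t2 = b)"
  proof -
    consider "u = [a,b,b]" | "u = [b,a,b]" | "u = [b,b,a]" using cases by blast
    then show ?thesis
    proof cases
      case 1 then show ?thesis using that[of 1] ab by (auto simp: sig_sub_def b_def Let_def nth_Cons')
    next
      case 2 then show ?thesis using that[of 2] ab by (auto simp: sig_sub_def b_def Let_def nth_Cons')
    next
      case 3 then show ?thesis using that[of 0] ab case3_aux[OF ab]
        by (simp add: sig_sub_def b_def Let_def)
    qed
  qed
  have lu: "length (filter P w) = 3" using \<open>length u = 3\<close> u_def by simp
  obtain q where q: "q < length w" "P (w ! q)" "ix P w q = k"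
    using ix_exists[of k P w] k(1) lu by auto
  have wq: "w ! q = b" using filter_nth_ix[of q w P] q k(3) u_def by simp
  have ev1: "ev a w = 1" "ev (a+1) w = 2" using ca cb by (simp_all add: ev_count)
  have s1: "sigma a w = Some (w[q := a])"
    using ev1 subst_in_update[of q w P a] q k(2) unfolding sigma_def
    by (simp add: P_def[symmetric] u_def[symmetric])
  have mw': "mset (w[q := a]) = add_mset a (mset w - {#b#})" using q wq by (simp add: mset_update)
  have ev2: "ev a (w[q:=a]) = 2" "ev (a+1) (w[q:=a]) = 1"
    using ca cb ab mw' wq q(1) by (simp_all add: ev_count b_def[symmetric])
  have fw': "filter P (w[q := a]) = u[k := a]"
    using filter_update[of q w P a] q by (simp add: P_def u_def)
  have "subst_in P (w[q := a]) ((filter P (w[q := a]))[ix P (w[q:=a]) q := b]) = (w[q:=a])[q := b]"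
    using subst_in_update[of q "w[q:=a]" P b] q by (simp add: P_def b_def)
  also have "\<dots> = w" using wq by (metis list_update_id list_update_overwrite)
  finally have s2: "sigma a (w[q := a]) = Some w"
    using ev2 fw' k q unfolding sigma_def
    by (simp add: P_def[symmetric] ix_update) (metis k(3) list_update_id list_update_overwrite)
  have c1: "0 < q \<longrightarrow> w ! (q-1) \<noteq> b"
  proof
    assume "0 < q"
    show "w ! (q-1) \<noteq> b"
    proof
      assume h: "w ! (q-1) = b"
      then have "P (w ! (q-1))" by (simp add: P_def b_def)
      moreover have "ix P w q = ix P w (q-1) + (if P (w ! (q-1)) then 1 else 0)"
        using ix_Suc[of "q-1" w P] \<open>0 < q\<close> q(1) by simp
      ultimately have "ix P w (q-1) = k - 1" "0 < k" using q by auto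
      then show False using filter_nth_ix[of "q-1" w P] \<open>P (w ! (q-1))\<close> q h k(5) u_def \<open>0 < q\<close> by (metis less_imp_diff_less)
    qed
  qed
  have c2: "\<forall>p. q < p \<and> p < length w \<and> w ! p = a \<longrightarrow> (\<exists>p2. q < p2 \<and> p2 < p \<and> w ! p2 = b)"
  proof (intro allI impI)
    fix p assume p: "q < p \<and> p < length w \<and> w ! p = a"
    have Pp: "P (w ! p)" using p by (simp add: P_def)
    have t: "k < ix P w p" using ix_strict[of q p w P] p q by simp
    have t3: "ix P w p < 3" using ix_less_len[of p w P] Pp p lu by simp
    have ut: "u ! ix P w p = a" using filter_nth_ix[of p w P] Pp p u_def by simp
    obtain t2 where t2: "k < t2" "t2 < ix P w p" "u ! t2 = b" using k(6) t t3 ut by blast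
    obtain q2 where q2: "q2 < length w" "P (w ! q2)" "ix P w q2 = t2"
      using ix_exists[of t2 P w] t2 t3 lu by auto
    have "q < q2" using ix_mono[of q2 q P w] q2 q t2 by (meson not_le leD)
    moreover have "q2 < p" using ix_mono[of p q2 P w] q2 t2 by (meson not_le leD)
    moreover have "w ! q2 = b" using filter_nth_ix[of q2 w P] q2 t2 u_def by simp
    ultimately show "\<exists>p2. q < p2 \<and> p2 < p \<and> w ! p2 = b" by blast
  qed
  show ?thesis using q(1) wq s1 s2 c1 c2 unfolding b_def by blast
qed



definition decr :: "nat list \<Rightarrow> bool" where
  "decr sh \<longleftrightarrow> (\<forall>i. Suc i < length sh \<longrightarrow> sh ! Suc i \<le> sh ! i)"

definition ss :: "nat list \<Rightarrow> int list \<Rightarrow> bool" where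
  "ss sh w \<longleftrightarrow> (\<forall>i j. i < length sh \<and> Suc j < sh ! i \<longrightarrow> w ! posn sh i j \<le> w ! posn sh i (Suc j)) \<and>
     (\<forall>i j. Suc i < length sh \<and> j < sh ! Suc i \<longrightarrow> w ! posn sh i j < w ! posn sh (Suc i) j)"

lemma decr_mono: assumes "decr sh" "i \<le> i'" "i' < length sh" shows "sh ! i' \<le> sh ! i"
  using assms(2,3)
proof (induction i' rule: dec_induct)
  case base then show ?case by simp
next
  case (step n) then show ?case using assms(1) unfolding decr_def by (metis Suc_lessD le_trans)
qed

lemma posn_Suc: "posn sh i (Suc j) = Suc (posn sh i j)"
  by (simp add: posn_def)

lemma row_mono: assumes "ss sh w" "i < length sh" "j \<le> j'" "j' < sh ! i"
  shows "w ! posn sh i j \<le> w ! posn sh i j'"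
  using assms(3,4)
proof (induction j' rule: dec_induct)
  case base then show ?case by simp
next
  case (step n) then show ?case using assms(1,2) unfolding ss_def by (metis Suc_lessD order_trans)
qed

lemma ss_step:
  fixes w :: "int list"
  assumes dec: "decr sh" and len: "length w = sum_list sh" and ssw: "ss sh w"
    and ca: "count (mset w) a = 1" and q: "q < length w" "w ! q = a + 1"
    and c1: "0 < q \<longrightarrow> w ! (q-1) \<noteq> a+1"
    and c2: "\<forall>p. q < p \<and> p < length w \<and> w ! p = a \<longrightarrow> (\<exists>p2. q < p2 \<and> p2 < p \<and> w ! p2 = a+1)"
  shows "ss sh (w[q := a])"
  unfolding ss_def
proof (intro conjI allI impI)
  fix i j assume ij: "i < length sh \<and> Suc j < sh ! i"
  define p1 where "p1 = posn sh i j"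
  have p2: "posn sh i (Suc j) = Suc p1" by (simp add: p1_def posn_Suc)
  have b2: "Suc p1 < length w" using posn_bound[of i sh "Suc j"] ij p2 len by simp
  have o: "w ! p1 \<le> w ! Suc p1" using ssw ij unfolding ss_def p1_def by (metis posn_Suc)
  have "Suc p1 = q \<Longrightarrow> w ! p1 \<noteq> a + 1" using c1 by auto
  then show "w[q := a] ! posn sh i j \<le> w[q := a] ! posn sh i (Suc j)"
    using o b2 q unfolding p2 p1_def[symmetric] by (auto simp: nth_list_update)
next
  fix i j assume ij: "Suc i < length sh \<and> j < sh ! Suc i"
  define p1 where "p1 = posn sh i j"
  define p2 where "p2 = posn sh (Suc i) j"
  have jl: "j < sh ! i" using ij dec unfolding decr_def by (meson less_le_trans)
  have c_low: "(i, j) \<in> cellsn sh" using ij jl by (simp add: cellsn_def)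
  have c_up: "(Suc i, j) \<in> cellsn sh" using ij by (simp add: cellsn_def)
  have lt: "p2 < p1" using posn_less_row[of i "Suc i" sh j j] ij unfolding p1_def p2_def by simp
  have b1: "p1 < length w" using posn_bound[of i sh j] ij jl len p1_def by simp
  have o: "w ! p1 < w ! p2" using ssw ij unfolding ss_def p1_def p2_def by blast
  have key: "p2 = q \<Longrightarrow> w ! p1 \<noteq> a"
  proof
    assume h: "p2 = q" "w ! p1 = a"
    then obtain r where r: "q < r" "r < p1" "w ! r = a + 1" using c2 lt b1 by blast
    then have "r < sum_list sh" using b1 len by simp
    then obtain i2 j2 where c2': "(i2, j2) \<in> cellsn sh" "posn sh i2 j2 = r" using posn_surj by blast
    have "i2 < Suc i \<or> (i2 = Suc i \<and> j < j2)"
      using posn_less_iff[OF c_up c2'(1)] r h c2' unfolding p2_def by auto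
    moreover have "i < i2 \<or> (i2 = i \<and> j2 < j)"
      using posn_less_iff[OF c2'(1) c_low] r c2' unfolding p1_def by simp
    ultimately have cs: "(i2 = i \<and> j2 < j) \<or> (i2 = Suc i \<and> j < j2)" by auto
    then show False
    proof
      assume "i2 = i \<and> j2 < j"
      then have "w ! posn sh i j2 \<le> w ! posn sh i j" using row_mono[OF ssw, of i j2 j] ij jl by simp
      then show False using h r c2' \<open>i2 = i \<and> j2 < j\<close> unfolding p1_def by simp
    next
      assume s: "i2 = Suc i \<and> j < j2"
      have j2: "j2 < sh ! Suc i" using c2' s by (simp add: cellsn_def)
      have j2': "j2 < sh ! i" using j2 dec ij unfolding decr_def by (meson less_le_trans)
      have "w ! posn sh i j2 < w ! posn sh (Suc i) j2" using ssw ij j2 unfolding ss_def by blast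
      moreover have "w ! posn sh i j \<le> w ! posn sh i j2" using row_mono[OF ssw, of i j j2] ij j2' s by simp
      ultimately have e: "w ! posn sh i j2 = a" using h r c2' s unfolding p1_def by simp
      have "posn sh i j2 < length w" using posn_bound[of i sh j2] ij j2' len by simp
      moreover have "posn sh i j2 \<noteq> p1" using s unfolding p1_def posn_def by simp
      ultimately have "2 \<le> count (mset w) a" using count_two[of "posn sh i j2" w p1 a] e h b1 by simp
      then show False using ca by simp
    qed
  qed
  show "w[q := a] ! posn sh i j < w[q := a] ! posn sh (Suc i) j"
    using o b1 lt q key unfolding p1_def[symmetric] p2_def[symmetric]
    by (auto simp: nth_list_update)
qed

definition Inv :: "int \<Rightarrow> int \<Rightarrow> nat list \<Rightarrow> int list \<Rightarrow> bool" where
  "Inv N m sh w \<longleftrightarrow> length w = sum_list sh \<and> ss sh w \<and> mset w = mset_set {1..N} + {#m#}"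

lemma chain:
  "decr sh \<Longrightarrow> Inv N (int k + 1) sh w \<Longrightarrow> int k + 1 \<le> N \<Longrightarrow>
   \<exists>v. sigs_down k w = Some v \<and> Inv N 1 sh v \<and> sigs_up k v = Some w"
proof (induction k arbitrary: w)
  case 0 then show ?case by simp
next
  case (Suc k)
  define a where "a = int (Suc k)"
  have ca: "count (mset w) a = 1" using Suc.prems unfolding Inv_def a_def by auto
  have cb: "count (mset w) (a+1) = 2" using Suc.prems unfolding Inv_def a_def by auto
  obtain q where q: "q < length w" "w ! q = a+1" "sigma a w = Some (w[q:=a])" "sigma a (w[q:=a]) = Some w"
     "0 < q \<longrightarrow> w ! (q-1) \<noteq> a+1"
     "\<forall>p. q < p \<and> p < length w \<and> w ! p = a \<longrightarrow> (\<exists>p2. q < p2 \<and> p2 < p \<and> w ! p2 = a+1)"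
    using sigma_step[OF ca cb] by blast
  have ss1: "ss sh (w[q:=a])"
    using ss_step[of sh w a q] Suc.prems ca q unfolding Inv_def by blast
  have "mset (w[q:=a]) = add_mset a (mset w - {#a+1#})" using q by (simp add: mset_update)
  also have "\<dots> = mset_set {1..N} + {#int k + 1#}" using Suc.prems unfolding Inv_def a_def by simp
  finally have "Inv N (int k + 1) sh (w[q:=a])" using ss1 Suc.prems unfolding Inv_def by simp
  then obtain v where v: "sigs_down k (w[q:=a]) = Some v" "Inv N 1 sh v" "sigs_up k v = Some (w[q:=a])"
    using Suc.IH Suc.prems by fastforce
  show ?case using v q unfolding a_def by simp
qed



abbreviation ent :: "tab \<Rightarrow> nat \<times> nat \<Rightarrow> int" where
  "ent T \<equiv> (\<lambda>(i,j). T ! i ! j)"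

abbreviation cells :: "tab \<Rightarrow> (nat \<times> nat) set" where
  "cells T \<equiv> cellsn (map length T)"

lemma cells_iff: "(i,j) \<in> cells T \<longleftrightarrow> i < length T \<and> j < length (T ! i)"
  by (auto simp: cellsn_def)

lemma posn_image_T: "(\<lambda>(i,j). posn (map length T) i j) ` cells T = {..<deg T}"
  using posn_image[of "map length T"] by (simp add: deg_sum)

lemma finite_cells: "finite (cellsn sh)"
  using posn_bij[of sh] bij_betw_finite by blast

lemma rw_comp: "x \<in> cells T \<Longrightarrow> (nth (rw T) \<circ> (\<lambda>(i,j). posn (map length T) i j)) x = ent T x"
  by (cases x) (simp add: cells_iff rw_nth)

lemma set_rw: "set (rw T) = ent T ` cells T"
proof -
  have "set (rw T) = nth (rw T) ` {..<deg T}" by (auto simp: deg_def in_set_conv_nth)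
  also have "\<dots> = (nth (rw T) \<circ> (\<lambda>(i,j). posn (map length T) i j)) ` cells T"
    by (simp add: posn_image_T[symmetric] image_comp)
  also have "\<dots> = ent T ` cells T" using rw_comp by (intro image_cong) auto
  finally show ?thesis .
qed

lemma distinct_iff_inj: "distinct xs \<longleftrightarrow> inj_on (nth xs) {..<length xs}"
  by (auto simp: distinct_conv_nth inj_on_def)

lemma distinct_rw: "distinct (rw T) \<longleftrightarrow> inj_on (ent T) (cells T)"
proof -
  have "distinct (rw T) \<longleftrightarrow> inj_on (nth (rw T)) ((\<lambda>(i,j). posn (map length T) i j) ` cells T)"
    by (simp add: distinct_iff_inj posn_image_T deg_def)
  also have "\<dots> \<longleftrightarrow> inj_on (nth (rw T) \<circ> (\<lambda>(i,j). posn (map length T) i j)) (cells T)"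
    using comp_inj_on_iff[OF posn_inj] by blast
  also have "\<dots> \<longleftrightarrow> inj_on (ent T) (cells T)" using rw_comp by (intro inj_on_cong) auto
  finally show ?thesis .
qed

lemma card_cells: "card (cells T) = deg T"
  using bij_betw_same_card[OF posn_bij[of "map length T"]] by (simp add: deg_sum)

lemma mset_nth: "mset xs = image_mset (nth xs) (mset_set {..<length xs})"
proof -
  have "mset xs = mset (map (nth xs) [0..<length xs])" by (simp add: map_nth)
  then show ?thesis by (simp add: lessThan_atLeast0)
qed

lemma mset_rw: "mset (rw T) = image_mset (ent T) (mset_set (cells T))"
proof -
  have "mset (rw T) = image_mset (nth (rw T)) (mset_set ((\<lambda>(i,j). posn (map length T) i j) ` cells T))"
    by (simp add: mset_nth posn_image_T deg_def)
  also have "\<dots> = image_mset (nth (rw T)) (image_mset (\<lambda>(i,j). posn (map length T) i j) (mset_set (cells T)))"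
    by (simp add: image_mset_mset_set[OF posn_inj])
  also have "\<dots> = image_mset (nth (rw T) \<circ> (\<lambda>(i,j). posn (map length T) i j)) (mset_set (cells T))"
    by (simp add: image_mset.compositionality)
  also have "\<dots> = image_mset (ent T) (mset_set (cells T))"
    using rw_comp finite_cells by (intro image_mset_cong) auto
  finally show ?thesis .
qed

lemma ps_shape: "map length A = map length B \<Longrightarrow> partition_shape A = partition_shape B"
proof -
  assume m: "map length A = map length B"
  then have l: "length A = length B" by (metis length_map)
  have li: "i < length A \<Longrightarrow> length (A ! i) = length (B ! i)" for i using m l by (metis nth_map)
  have "(\<forall>r\<in>set A. r \<noteq> []) = (\<forall>r\<in>set B. r \<noteq> [])"
    using l li by (simp add: all_set_conv_all_nth flip: length_greater_0_conv)
  moreover have "(\<forall>i. Suc i < length A \<longrightarrow> length (A ! Suc i) \<le> length (A ! i)) =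
    (\<forall>i. Suc i < length B \<longrightarrow> length (B ! Suc i) \<le> length (B ! i))"
    using l li by (metis Suc_lessD)
  ultimately show ?thesis unfolding partition_shape_def by simp
qed

lemma ps_decr: "partition_shape T \<Longrightarrow> decr (map length T)"
  by (simp add: partition_shape_def decr_def)

lemma ps_nonempty: "partition_shape T \<Longrightarrow> i < length T \<Longrightarrow> 0 < length (T ! i)"
  by (auto simp: partition_shape_def)

lemma ps_mono: "partition_shape T \<Longrightarrow> i \<le> i' \<Longrightarrow> i' < length T \<Longrightarrow> length (T ! i') \<le> length (T ! i)"
  using decr_mono[OF ps_decr, of T i i'] by simp

lemma standard_vals: "standard T \<Longrightarrow> i < length T \<Longrightarrow> j < length (T ! i) \<Longrightarrow> 1 \<le> T ! i ! j \<and> T ! i ! j \<le> int (deg T)"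
proof -
  assume a: "standard T" "i < length T" "j < length (T ! i)"
  then have "(i,j) \<in> cells T" by (simp add: cells_iff)
  then have "ent T (i,j) \<in> ent T ` cells T" by (rule imageI)
  then have "T ! i ! j \<in> set (rw T)" by (simp add: set_rw)
  then show ?thesis using a unfolding standard_def by auto
qed



lemma aterms_facts:
  assumes std: "standard T" and A: "T' \<in> Aterms T"
  shows "partition_shape T' \<and> deg T' = deg T + 2 \<and> ss (map length T') (rw T') \<and>
    mset (rw T') = mset_set {1..int (deg T) + 1} + {#int (deg T) + 1#} \<and>
    Rdel (int (deg T) + 1) T' = T"
proof -
  define n where "n = deg T"
  have ps: "partition_shape T'" and dg: "deg T' = n + 2" and lT: "length T \<le> length T'"
    and tk: "\<And>i. i < length T \<Longrightarrow> take (length (T ! i)) (T' ! i) = T ! i"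
    and nw: "\<And>i j. i < length T' \<Longrightarrow> j < length (T' ! i) \<Longrightarrow> rowlen T i \<le> j \<Longrightarrow> T' ! i ! j = int n + 1"
    and cl: "\<And>i1 i2 j. i1 < length T' \<Longrightarrow> i2 < length T' \<Longrightarrow> rowlen T i1 \<le> j \<Longrightarrow> j < length (T' ! i1) \<Longrightarrow>
        rowlen T i2 \<le> j \<Longrightarrow> j < length (T' ! i2) \<Longrightarrow> i1 = i2"
    using A unfolding Aterms_def n_def by blast+
  have psT: "partition_shape T" using std by (simp add: standard_def)
  have pl: "i < length T \<Longrightarrow> length (T ! i) \<le> length (T' ! i)" for i
    using tk[of i] by (metis length_take min.absorb_iff1 min.commute)
  have pe: "i < length T \<Longrightarrow> j < length (T ! i) \<Longrightarrow> T' ! i ! j = T ! i ! j" for i j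
    using tk[of i] by (metis nth_take)
  have vals: "i < length T \<Longrightarrow> j < length (T ! i) \<Longrightarrow> 1 \<le> T ! i ! j \<and> T ! i ! j \<le> int n" for i j
    using standard_vals[OF std] n_def by blast
  have rl: "rowlen T i = (if i < length T then length (T ! i) else 0)" for i by (simp add: rowlen_def)
  have rows: "T' ! i ! j \<le> T' ! i ! Suc j" if "i < length T'" "Suc j < length (T' ! i)" for i j
  proof (cases "Suc j < rowlen T i")
    case True
    then have "i < length T" "Suc j < length (T ! i)" by (auto simp: rl split: if_splits)
    moreover have "sorted_wrt (<) (T ! i)" using std \<open>i < length T\<close> by (simp add: standard_def)
    ultimately show ?thesis using pe sorted_wrt_nth_less[of "(<)" "T ! i" j "Suc j"] by fastforce
  next
    case False
    then have "T' ! i ! Suc j = int n + 1" using nw that by simp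
    moreover have "T' ! i ! j \<le> int n + 1"
    proof (cases "j < rowlen T i")
      case True
      then have "i < length T" "j < length (T ! i)" by (auto simp: rl split: if_splits)
      then show ?thesis using pe vals by fastforce
    next
      case False then show ?thesis using nw that by simp
    qed
    ultimately show ?thesis by simp
  qed
  have cols: "T' ! i ! j < T' ! Suc i ! j" if "Suc i < length T'" "j < length (T' ! Suc i)" for i j
  proof (cases "j < rowlen T (Suc i)")
    case True
    then have a: "Suc i < length T" "j < length (T ! Suc i)" by (auto simp: rl split: if_splits)
    then have "j < length (T ! i)" using psT unfolding partition_shape_def by (meson less_le_trans)
    then show ?thesis using a pe std unfolding standard_def by (metis Suc_lessD)
  next
    case False
    then have up: "T' ! Suc i ! j = int n + 1" using nw that by simp
    have jl: "j < length (T' ! i)" using ps that unfolding partition_shape_def by (meson less_le_trans)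
    show ?thesis
    proof (cases "j < rowlen T i")
      case True
      then have "i < length T" "j < length (T ! i)" by (auto simp: rl split: if_splits)
      then show ?thesis using pe vals up by fastforce
    next
      case False
      then have "i = Suc i" using cl[of i "Suc i" j] that jl \<open>\<not> j < rowlen T (Suc i)\<close> by simp
      then show ?thesis by simp
    qed
  qed
  have ssT': "ss (map length T') (rw T')"
    unfolding ss_def
  proof (intro conjI allI impI)
    fix i j assume "i < length (map length T') \<and> Suc j < map length T' ! i"
    then have "i < length T'" "Suc j < length (T' ! i)" by auto
    then show "rw T' ! posn (map length T') i j \<le> rw T' ! posn (map length T') i (Suc j)"
      using rows[of i j] rw_nth[of i T' j] rw_nth[of i T' "Suc j"] by simp
  next
    fix i j assume "Suc i < length (map length T') \<and> j < map length T' ! Suc i"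
    then have h: "Suc i < length T'" "j < length (T' ! Suc i)" by auto
    then have "j < length (T' ! i)" using ps unfolding partition_shape_def by (meson less_le_trans)
    then show "rw T' ! posn (map length T') i j < rw T' ! posn (map length T') (Suc i) j"
      using cols[of i j] h rw_nth[of i T' j] rw_nth[of "Suc i" T' j] by simp
  qed
  define NC where "NC = {(i,j). (i,j) \<in> cells T' \<and> rowlen T i \<le> j}"
  have sub: "cells T \<subseteq> cells T'" using lT pl by (auto simp: cells_iff) (meson less_le_trans)
  have un: "cells T' = cells T \<union> NC"
    using sub by (auto simp: NC_def cells_iff rl)
  have dj: "cells T \<inter> NC = {}" by (auto simp: NC_def cells_iff rl)
  have fNC: "finite NC" using finite_cells[of "map length T'"] un by auto
  have cNC: "card NC = 2"
    using card_Un_disjoint[OF finite_cells fNC dj] un card_cells[of T'] card_cells[of T] dg n_def by simp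
  have "mset (rw T') = image_mset (ent T') (mset_set (cells T) + mset_set NC)"
    by (simp add: mset_rw un mset_set_Union[OF finite_cells fNC dj])
  also have "\<dots> = image_mset (ent T') (mset_set (cells T)) + image_mset (ent T') (mset_set NC)" by simp
  also have "image_mset (ent T') (mset_set (cells T)) = image_mset (ent T) (mset_set (cells T))"
    using pe finite_cells by (intro image_mset_cong) (auto simp: cells_iff)
  also have "\<dots> = mset (rw T)" by (simp add: mset_rw)
  also have "\<dots> = mset_set {1..int n}"
    using std unfolding standard_def n_def by (metis mset_set_set)
  also have "image_mset (ent T') (mset_set NC) = image_mset (\<lambda>_. int n + 1) (mset_set NC)"
    using nw fNC by (intro image_mset_cong) (auto simp: NC_def cells_iff)
  also have "\<dots> = replicate_mset 2 (int n + 1)" using image_mset_const_eq[of "int n + 1" "mset_set NC"] cNC by simp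
  finally have m: "mset (rw T') = mset_set {1..int n} + replicate_mset 2 (int n + 1)" .
  have "{1..int n + 1} = insert (int n + 1) {1..int n}" using atLeastAtMostPlus1_int_conv[of 1 "int n"] by (simp add: add.commute)
  then have "mset_set {1..int n + 1} = add_mset (int n + 1) (mset_set {1..int n})" by simp
  then have mT': "mset (rw T') = mset_set {1..int n + 1} + {#int n + 1#}" using m by (simp add: numeral_2_eq_2)
  have mf: "map (filter (\<lambda>x. x \<noteq> int n + 1)) T' = T @ replicate (length T' - length T) []"
  proof (rule nth_equalityI)
    show "length (map (filter (\<lambda>x. x \<noteq> int n + 1)) T') = length (T @ replicate (length T' - length T) [])"
      using lT by simp
  next
    fix i assume "i < length (map (filter (\<lambda>x. x \<noteq> int n + 1)) T')"
    then have i: "i < length T'" by simp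
    show "map (filter (\<lambda>x. x \<noteq> int n + 1)) T' ! i = (T @ replicate (length T' - length T) []) ! i"
    proof (cases "i < length T")
      case True
      have "T' ! i = take (length (T ! i)) (T' ! i) @ drop (length (T ! i)) (T' ! i)" by simp
      moreover have "filter (\<lambda>x. x \<noteq> int n + 1) (drop (length (T ! i)) (T' ! i)) = []"
        using nw[of i] i True by (auto simp: filter_empty_conv in_set_conv_nth rl)
      moreover have "filter (\<lambda>x. x \<noteq> int n + 1) (T ! i) = T ! i"
        using vals[of i] True by (auto simp: filter_id_conv in_set_conv_nth) (metis add_le_same_cancel1 not_one_le_zero)
      ultimately show ?thesis using True tk[of i] i by (simp add: nth_append) (metis append_Nil2 filter_append)
    next
      case False
      have "filter (\<lambda>x. x \<noteq> int n + 1) (T' ! i) = []"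
        using nw[of i] i False by (auto simp: filter_empty_conv in_set_conv_nth rl)
      then show ?thesis using False i by (simp add: nth_append)
    qed
  qed
  have "Rdel (int n + 1) T' = filter (\<lambda>r. r \<noteq> []) T" unfolding Rdel_def mf by simp
  also have "\<dots> = T" using psT unfolding partition_shape_def by (simp add: filter_id_conv)
  finally have "Rdel (int n + 1) T' = T" .
  then show ?thesis using ps dg ssT' mT' n_def by simp
qed



lemma rpl_append: "(\<forall>x\<in>set xs. x \<noteq> a \<and> x \<noteq> b) \<Longrightarrow> rpl a b c d (xs @ ys) = xs @ rpl a b c d ys"
  by (induction xs) auto

lemma word_final:
  fixes v :: "int list"
  assumes l: "Suc L < length v" and v1: "v ! L = 1" "v ! Suc L = 1"
    and v2: "\<forall>p<length v. p \<noteq> L \<and> p \<noteq> Suc L \<longrightarrow> 2 \<le> v ! p"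
  shows "Option.bind (rop 1 1 0 1 v) (tau 1) = Some ((map (\<lambda>x. x+1) v)[L := 1])"
    and "Option.bind (tau (-1) ((map (\<lambda>x. x+1) v)[L := 1])) (rop 0 1 1 1) = Some v"
proof -
  define xs where "xs = take L v"
  define zs where "zs = drop (Suc (Suc L)) v"
  have lx: "length xs = L" using l by (simp add: xs_def)
  have dec: "v = xs @ 1 # 1 # zs"
  proof -
    have "v = take L v @ v ! L # drop (Suc L) v" using l by (simp add: id_take_nth_drop)
    moreover have "drop (Suc L) v = v ! Suc L # drop (Suc (Suc L)) v" using l by (simp add: Cons_nth_drop_Suc)
    ultimately show ?thesis using v1 by (simp add: xs_def zs_def)
  qed
  have sx: "\<forall>x\<in>set xs. 2 \<le> x"
  proof
    fix x assume "x \<in> set xs"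
    then obtain p where "p < L" "x = v ! p" using l by (auto simp: xs_def in_set_conv_nth)
    then show "2 \<le> x" using v2 l by simp
  qed
  have sz: "\<forall>x\<in>set zs. 2 \<le> x"
  proof
    fix x assume "x \<in> set zs"
    then obtain p where "p < length v - Suc (Suc L)" "x = v ! (Suc (Suc L) + p)" using l by (auto simp: zs_def in_set_conv_nth)
    then show "2 \<le> x" using v2 l by simp
  qed
  have fx: "filter P xs = []" if "\<And>x. P x \<Longrightarrow> x < 2" for P using sx that by (auto simp: filter_empty_conv) (meson not_le)
  have fz: "filter P zs = []" if "\<And>x. P x \<Longrightarrow> x < 2" for P using sz that by (auto simp: filter_empty_conv) (meson not_le)
  have nx: "\<forall>x\<in>set xs. x \<noteq> a \<and> x \<noteq> b" if "a < 2" "b < 2" for a b using sx that by force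
  have mz: "map (\<lambda>y. if y = 0 \<or> y = 1 then 1 else y) zs = zs" using sz by (intro map_idI) auto
  have r1: "rop 1 1 0 1 v = Some (xs @ 0 # 1 # zs)"
    unfolding rop_def dec using fx[of "\<lambda>x. x = 1 \<or> x = 1"] fz[of "\<lambda>x. x = 1 \<or> x = 1"]
    by (simp add: rpl_append[OF nx[of 1 1]])
  have "map (\<lambda>x. x + 1) (xs @ 0 # 1 # zs) = (map (\<lambda>x. x+1) v)[L := 1]"
    unfolding dec using lx by (simp add: list_update_append)
  then show "Option.bind (rop 1 1 0 1 v) (tau 1) = Some ((map (\<lambda>x. x+1) v)[L := 1])"
    using r1 by (simp add: tau_def)
  have t: "tau (-1) ((map (\<lambda>x. x+1) v)[L := 1]) = Some (xs @ 0 # 1 # zs)"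
    unfolding tau_def dec using lx by (simp add: list_update_append o_def)
  have f0x: "filter (\<lambda>x. x = 0 \<or> x = 1) xs = []" by (rule fx) auto
  have f0z: "filter (\<lambda>x. x = 0 \<or> x = 1) zs = []" by (rule fz) auto
  have "rop 0 1 1 1 (xs @ 0 # 1 # zs) = Some v"
    unfolding rop_def using f0x f0z mz
    by (simp add: rpl_append[OF nx[of 0 1]] dec)
  then show "Option.bind (tau (-1) ((map (\<lambda>x. x+1) v)[L := 1])) (rop 0 1 1 1) = Some v"
    using t by simp
qed

lemma cnt_le: "mset (v::int list) = mset_set {1..N} + {#1#} \<Longrightarrow> 2 \<le> x \<Longrightarrow> count (mset v) x \<le> 1"
  by (simp add: count_mset_set')

lemma ones:
  fixes v :: "int list"
  assumes dec: "decr sh" and I: "Inv N 1 sh v" and N1: "1 \<le> N"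
  shows "0 < length sh \<and> 1 < sh ! 0 \<and> v ! posn sh 0 0 = 1 \<and> v ! posn sh 0 1 = 1 \<and>
    (\<forall>p<length v. v ! p = 1 \<longrightarrow> p = posn sh 0 0 \<or> p = posn sh 0 1) \<and> (\<forall>p<length v. 1 \<le> v ! p) \<and>
    (\<forall>p<length v. \<forall>p'<length v. v ! p = v ! p' \<longrightarrow> 2 \<le> v ! p \<longrightarrow> p = p')"
proof -
  have len: "length v = sum_list sh" and ssv: "ss sh v" and mv: "mset v = mset_set {1..N} + {#1#}"
    using I unfolding Inv_def by auto
  have "set_mset (mset v) = {1..N} \<union> {1}" unfolding mv by simp
  then have "set v = {1..N}" using N1 by auto
  note sv = this
  have ge1: "\<forall>p<length v. 1 \<le> v ! p"
  proof (intro allI impI)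
    fix p assume "p < length v"
    then have "v ! p \<in> set v" by (rule nth_mem)
    then show "1 \<le> v ! p" using sv by simp
  qed
  have uq: "\<forall>p<length v. \<forall>p'<length v. v ! p = v ! p' \<longrightarrow> 2 \<le> v ! p \<longrightarrow> p = p'"
  proof (intro allI impI, rule ccontr)
    fix p p' assume h: "p < length v" "p' < length v" "v ! p = v ! p'" "2 \<le> v ! p" "p \<noteq> p'"
    then have "2 \<le> count (mset v) (v ! p)" using count_two[of p v p' "v ! p"] by presburger
    moreover have "count (mset v) (v ! p) \<le> 1" using cnt_le[OF mv h(4)] .
    ultimately show False by simp
  qed
  define L where "L = posn sh 0 0"
  have pL: "posn sh 0 j = L + j" for j by (simp add: L_def posn_def)
  define S where "S = {p. p < length v \<and> v ! p = 1}"
  have cS: "card S = 2" using count_pos[of v 1] mv N1 unfolding S_def by simp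
  have fS: "finite S" unfolding S_def by simp
  have claim: "\<exists>j \<le> 1. j < sh ! 0 \<and> 0 < length sh \<and> p = L + j" if "p \<in> S" for p
  proof -
    have p: "p < sum_list sh" "v ! p = 1" using that len by (auto simp: S_def)
    obtain i j where c: "(i, j) \<in> cellsn sh" "posn sh i j = p" using posn_surj[OF p(1)] by blast
    have i0: "i = 0"
    proof (rule ccontr)
      assume "i \<noteq> 0"
      then obtain i' where i': "i = Suc i'" by (cases i) auto
      then have "Suc i' < length sh" "j < sh ! Suc i'" using c by (auto simp: cellsn_def)
      then have "v ! posn sh i' j < v ! posn sh (Suc i') j" using ssv unfolding ss_def by blast
      moreover have "sh ! Suc i' \<le> sh ! i'" using dec \<open>Suc i' < length sh\<close> unfolding decr_def by blast
      then have "posn sh i' j < length v" using posn_bound[of i' sh j] \<open>Suc i' < length sh\<close> \<open>j < sh ! Suc i'\<close> len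
        by simp
      then have "1 \<le> v ! posn sh i' j" using ge1 by blast
      moreover have "v ! posn sh (Suc i') j = 1" using c i' p by simp
      ultimately show False by simp
    qed
    have j1: "j \<le> 1"
    proof (rule ccontr)
      assume "\<not> j \<le> 1"
      then obtain k where k: "j = Suc (Suc k)" by (cases j; cases "j - 1") auto
      have jj: "0 < length sh" "j < sh ! 0" using c i0 by (auto simp: cellsn_def)
      have a1: "v ! posn sh 0 k \<le> v ! posn sh 0 (Suc k)" "v ! posn sh 0 (Suc k) \<le> v ! posn sh 0 j"
        using row_mono[OF ssv, of 0] jj k by simp_all
      have b: "posn sh 0 j < length v" using posn_bound[of 0 sh j] jj len by simp
      have pk: "posn sh 0 k < length v" "posn sh 0 (Suc k) < length v" using b pL k by simp_all
      have "v ! posn sh 0 j = 1" using p c i0 by simp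
      then have e1: "v ! posn sh 0 (Suc k) = 1" using a1(2) ge1 pk by force
      then have "v ! posn sh 0 k = 1" using a1(1) ge1 pk by force
      note e = this e1
      then have "{L + k, L + Suc k, L + j} \<subseteq> S" using b k p c i0 pL by (auto simp: S_def)
      then have "card {L + k, L + Suc k, L + j} \<le> card S" using fS by (rule card_mono[rotated])
      then show False using cS k by simp
    qed
    show ?thesis using c i0 j1 pL by (auto simp: cellsn_def)
  qed
  have "S \<subseteq> {L, L + 1}"
  proof
    fix p assume "p \<in> S"
    then obtain j where "j \<le> 1" "p = L + j" using claim by blast
    then show "p \<in> {L, L + 1}" by (cases j) auto
  qed
  then have SL: "S = {L, L + 1}" using cS by (intro card_subset_eq) auto
  then have "L + 1 \<in> S" by simp
  then obtain j where "j \<le> 1" "j < sh ! 0" "0 < length sh" "L + 1 = L + j" using claim by blast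
  then have sh0: "1 < sh ! 0" "0 < length sh" by auto
  have "L \<in> S" "L + 1 \<in> S" using SL by auto
  then have r1: "v ! posn sh 0 0 = 1" "v ! posn sh 0 1 = 1" using pL[of 1] unfolding S_def L_def by auto
  have r2: "\<forall>p<length v. v ! p = 1 \<longrightarrow> p = posn sh 0 0 \<or> p = posn sh 0 1"
  proof (intro allI impI)
    fix p assume "p < length v" "v ! p = 1"
    then have "p \<in> S" by (simp add: S_def)
    then show "p = posn sh 0 0 \<or> p = posn sh 0 1" using SL pL[of 1] unfolding L_def by auto
  qed
  show ?thesis using r1 r2 sh0 ge1 uq by blast
qed



lemma mset_set_distinct: "mset w = mset_set A \<Longrightarrow> finite A \<Longrightarrow> distinct w \<and> set w = A"
proof -
  assume m: "mset w = mset_set A" and f: "finite A"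
  have s: "set w = A" using m f by (metis finite_set_mset_mset_set set_mset_mset)
  have "\<forall>a. count (mset w) a = (if a \<in> set w then 1 else 0)" using m f s by (simp add: count_mset_set')
  then show ?thesis using s distinct_count_atmost_1 by blast
qed

lemma wlt:
  fixes v :: "int list"
  assumes ge1: "\<forall>p<length v. 1 \<le> v ! p"
    and on: "\<forall>p<length v. v ! p = 1 \<longrightarrow> p = L \<or> p = Suc L"
    and uq: "\<forall>p<length v. \<forall>p'<length v. v ! p = v ! p' \<longrightarrow> 2 \<le> v ! p \<longrightarrow> p = p'"
    and vL: "v ! L = 1" "v ! Suc L = 1" "Suc L < length v"
    and p: "p1 < length v" "p2 < length v"
  shows "v ! p1 < v ! p2 \<Longrightarrow> (map (\<lambda>x. x+1) v)[L := 1] ! p1 < (map (\<lambda>x. x+1) v)[L := 1] ! p2"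
    and "p2 = Suc p1 \<Longrightarrow> v ! p1 \<le> v ! p2 \<Longrightarrow> (map (\<lambda>x. x+1) v)[L := 1] ! p1 < (map (\<lambda>x. x+1) v)[L := 1] ! p2"
proof -
  have wn: "(map (\<lambda>x. x+1) v)[L := 1] ! p = (if p = L then 1 else v ! p + 1)" if "p < length v" for p
    using that by (simp add: nth_list_update)
  show A: "(map (\<lambda>x. x+1) v)[L := 1] ! p1 < (map (\<lambda>x. x+1) v)[L := 1] ! p2" if "v ! p1 < v ! p2"
  proof -
    have "p2 \<noteq> L" using that vL ge1 p by force
    then show ?thesis using that wn p ge1 by auto
  qed
  assume s: "p2 = Suc p1" "v ! p1 \<le> v ! p2"
  show "(map (\<lambda>x. x+1) v)[L := 1] ! p1 < (map (\<lambda>x. x+1) v)[L := 1] ! p2"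
  proof (cases "v ! p1 < v ! p2")
    case True then show ?thesis using A by blast
  next
    case False
    then have eq: "v ! p1 = v ! p2" using s by simp
    have "\<not> 2 \<le> v ! p1"
    proof
      assume "2 \<le> v ! p1"
      then have "p1 = p2" using uq p eq by blast
      then show False using s by simp
    qed
    then have "v ! p1 = 1" "v ! p2 = 1" using ge1 p eq by force+
    then have a: "p1 = L \<or> p1 = Suc L" "p2 = L \<or> p2 = Suc L" using on p by blast+
    then have "p1 = L" "p2 = Suc L" using s(1) by auto
    then show ?thesis using wn p vL by simp
  qed
qed

lemma B0_main:
  assumes std: "standard T" and X: "X \<in> B0 T"
  shows "Bstar0 X = Some T \<and> standard X \<and> 0 < length X \<and> 1 < length (X ! 0) \<and> X ! 0 ! 0 = 1 \<and> X ! 0 ! 1 = 2"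
proof -
  define n where "n = deg T"
  obtain T' w where T': "T' \<in> Aterms T"
    and bw: "Option.bind (sigs_down (deg T) (rw T')) (\<lambda>v. Option.bind (rop 1 1 0 1 v) (tau 1)) = Some w"
    and Xd: "X = fill T' w"
    using X unfolding B0_def by blast
  have ps: "partition_shape T'" and dg: "deg T' = n + 2" and ssT': "ss (map length T') (rw T')"
    and mT': "mset (rw T') = mset_set {1..int n + 1} + {#int n + 1#}"
    and Rd: "Rdel (int n + 1) T' = T"
    using aterms_facts[OF std T'] unfolding n_def by auto
  define sh where "sh = map length T'"
  have dec: "decr sh" using ps_decr[OF ps] sh_def by simp
  have lrw: "length (rw T') = sum_list sh" using deg_sum[of T'] sh_def by (simp add: deg_def)
  have I0: "Inv (int n + 1) (int n + 1) sh (rw T')" unfolding Inv_def using lrw ssT' mT' sh_def by simp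
  obtain v where v: "sigs_down n (rw T') = Some v" "Inv (int n + 1) 1 sh v" "sigs_up n v = Some (rw T')"
    using chain[OF dec I0] by auto
  have O: "0 < length sh \<and> 1 < sh ! 0 \<and> v ! posn sh 0 0 = 1 \<and> v ! posn sh 0 1 = 1 \<and>
    (\<forall>p<length v. v ! p = 1 \<longrightarrow> p = posn sh 0 0 \<or> p = posn sh 0 1) \<and> (\<forall>p<length v. 1 \<le> v ! p) \<and>
    (\<forall>p<length v. \<forall>p'<length v. v ! p = v ! p' \<longrightarrow> 2 \<le> v ! p \<longrightarrow> p = p')"
    using ones[OF dec v(2)] by simp
  define L where "L = posn sh 0 0"
  have p01: "posn sh 0 1 = Suc L" by (simp add: L_def posn_def)
  have lv: "length v = sum_list sh" using v(2) unfolding Inv_def by simp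
  have sL: "Suc L < length v" using posn_bound[of 0 sh 1] O p01 lv by simp
  have vL: "v ! L = 1" "v ! Suc L = 1" using O p01 L_def by auto
  have on: "\<forall>p<length v. v ! p = 1 \<longrightarrow> p = L \<or> p = Suc L" using O p01 L_def by auto
  have ge1: "\<forall>p<length v. 1 \<le> v ! p" and uq: "\<forall>p<length v. \<forall>p'<length v. v ! p = v ! p' \<longrightarrow> 2 \<le> v ! p \<longrightarrow> p = p'"
    using O by auto
  have v2: "\<forall>p<length v. p \<noteq> L \<and> p \<noteq> Suc L \<longrightarrow> 2 \<le> v ! p"
  proof (intro allI impI)
    fix p assume "p < length v" "p \<noteq> L \<and> p \<noteq> Suc L"
    then show "2 \<le> v ! p" using ge1 on by force
  qed
  note wf = word_final[OF sL vL v2]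
  have wd: "w = (map (\<lambda>x. x+1) v)[L := 1]" using bw v(1) wf(1) n_def by simp
  have lw: "length w = deg T'" using wd lv sh_def deg_sum[of T'] by simp
  have shX: "map length X = sh" using fill_shape[OF lw] Xd sh_def by simp
  have rwX: "rw X = w" using rw_fill[OF lw] Xd by simp
  have degX: "deg X = n + 2" using rwX lw dg by (simp add: deg_def)
  have lX: "length X = length T'" using shX sh_def by (metis length_map)
  have Xn: "X ! i ! j = w ! posn sh i j" if "i < length T'" "j < length (T' ! i)" for i j
    using fill_nth[OF lw that] Xd sh_def by simp
  have lXi: "length (X ! i) = length (T' ! i)" if "i < length T'" for i
    using shX sh_def that lX by (metis nth_map)
  have psX: "partition_shape X" using ps_shape[of X T'] shX sh_def ps by simp
  have rowsX: "sorted_wrt (<) (X ! i)" if i: "i < length X" for i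
  proof -
    have "X ! i ! j < X ! i ! Suc j" if j: "Suc j < length (X ! i)" for j
    proof -
      have ij: "i < length sh" "Suc j < sh ! i" using i j lX lXi sh_def by auto
      have b: "posn sh i (Suc j) < length v" using posn_bound[of i sh "Suc j"] ij lv by simp
      have o: "v ! posn sh i j \<le> v ! posn sh i (Suc j)" using v(2) ij unfolding Inv_def ss_def by blast
      have "w ! posn sh i j < w ! posn sh i (Suc j)"
        using wlt(2)[OF ge1 on uq vL sL, of "posn sh i j" "posn sh i (Suc j)"] b o wd by (simp add: posn_Suc)
      then show ?thesis using Xn[of i j] Xn[of i "Suc j"] i j lX lXi by simp
    qed
    then show ?thesis by (simp add: sorted_wrt_iff_nth_Suc_transp)
  qed
  have colsX: "X ! i ! j < X ! Suc i ! j" if ij: "Suc i < length X" "j < length (X ! Suc i)" for i j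
  proof -
    have ij': "Suc i < length sh" "j < sh ! Suc i" using ij lX lXi sh_def by auto
    have jl: "j < sh ! i" using dec ij' unfolding decr_def by (meson less_le_trans)
    have b: "posn sh i j < length v" "posn sh (Suc i) j < length v"
      using posn_bound[of i sh j] posn_bound[of "Suc i" sh j] ij' jl lv by simp_all
    have o: "v ! posn sh i j < v ! posn sh (Suc i) j" using v(2) ij' unfolding Inv_def ss_def by blast
    have "w ! posn sh i j < w ! posn sh (Suc i) j"
      using wlt(1)[OF ge1 on uq vL sL b] o wd by simp
    then show ?thesis using Xn[of i j] Xn[of "Suc i" j] ij' jl sh_def by simp
  qed
  have mw: "mset w = mset_set {1..int n + 2}"
  proof -
    have m1: "mset v = mset_set {1..int n + 1} + {#1#}" using v(2) unfolding Inv_def by simp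
    have "mset w = add_mset 1 (mset (map (\<lambda>x. x+1) v) - {#2#})"
      using wd sL vL by (simp add: mset_update)
    also have "mset (map (\<lambda>x. x+1) v) = image_mset (\<lambda>x. x+1) (mset_set {1..int n + 1}) + {#2#}"
      using m1 by simp
    also have "image_mset (\<lambda>x. x+1) (mset_set {1..int n + 1}) = mset_set ((\<lambda>x. x+1) ` {1..int n + 1})"
      by (rule image_mset_mset_set) (simp add: inj_on_def)
    also have "(\<lambda>x. x+1) ` {1..int n + 1} = {2..int n + 2}"
      by (auto simp: image_iff)
    finally have "mset w = add_mset 1 (mset_set {2..int n + 2})" by simp
    also have "\<dots> = mset_set {1..int n + 2}"
    proof -
      have "{1..int n + 2} = insert 1 {2..int n + 2}" by auto
      then show ?thesis by simp
    qed
    finally show ?thesis .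
  qed
  have dsX: "distinct (rw X) \<and> set (rw X) = {1 .. int (deg X)}"
    using mset_set_distinct[OF mw] rwX degX by simp
  have stdX: "standard X" unfolding standard_def using psX rowsX colsX dsX by blast
  have w01: "w ! L = 1" "w ! Suc L = 2" using wd sL vL by (simp_all add: nth_list_update)
  have prec: "precedes 1 2 (rw X)" unfolding precedes_def rwX using w01 sL wd by (intro exI[of _ L] exI[of _ "Suc L"]) simp
  have inv: "Option.bind (tau (-1) (rw X)) (rop 0 1 1 1) = Some v" using wf(2) rwX wd by simp
  have "fill X (rw T') = T'" using fill_cong[of X T' "rw T'"] shX sh_def fill_rw by simp
  then have "Bstar0 X = Some (Rdel (int n + 1) T')"
    unfolding Bstar0_def using stdX degX prec inv v(3) by (simp add: add.commute)
  then have B: "Bstar0 X = Some T" using Rd by simp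
  have c0: "0 < length T'" "0 < length (T' ! 0)" "1 < length (T' ! 0)" using O sh_def by auto
  have "X ! 0 ! 0 = w ! L" using Xn[OF c0(1) c0(2)] L_def by simp
  moreover have "X ! 0 ! 1 = w ! Suc L" using Xn[OF c0(1) c0(3)] p01 by simp
  ultimately have X00: "X ! 0 ! 0 = 1" "X ! 0 ! 1 = 2" using w01 by simp_all
  show ?thesis using B stdX X00 O lX lXi sh_def by auto
qed



definition ct :: "tab \<Rightarrow> nat \<Rightarrow> nat" where
  "ct T j = length (filter (\<lambda>r. j < length r) T)"

lemma filter_dc:
  assumes "\<forall>i k. i \<le> k \<longrightarrow> k < length T \<longrightarrow> P (T ! k) \<longrightarrow> P (T ! i)"
  shows "i < length (filter P T) \<longleftrightarrow> i < length T \<and> P (T ! i)"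
  using assms
proof (induction T arbitrary: i)
  case Nil then show ?case by simp
next
  case (Cons x xs)
  have dc: "\<forall>i k. i \<le> k \<longrightarrow> k < length xs \<longrightarrow> P (xs ! k) \<longrightarrow> P (xs ! i)"
  proof (intro allI impI)
    fix i k assume "i \<le> k" "k < length xs" "P (xs ! k)"
    then show "P (xs ! i)" using Cons.prems[rule_format, of "Suc i" "Suc k"] by simp
  qed
  show ?case
  proof (cases "P x")
    case True
    then show ?thesis using Cons.IH[OF dc] by (cases i) auto
  next
    case False
    have "filter P xs = []"
    proof (rule ccontr)
      assume "filter P xs \<noteq> []"
      then obtain y where "y \<in> set xs" "P y" by (metis filter_False)
      then obtain k where "k < length xs" "P (xs ! k)" by (metis in_set_conv_nth)
      then have "P ((x # xs) ! 0)" using Cons.prems[rule_format, of 0 "Suc k"] by simp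
      then show False using False by simp
    qed
    moreover have "\<not> P ((x # xs) ! i)" if "i < length (x # xs)" for i
    proof
      assume "P ((x # xs) ! i)"
      then have "P ((x # xs) ! 0)" using Cons.prems[rule_format, of 0 i] that by simp
      then show False using False by simp
    qed
    ultimately show ?thesis using False by auto
  qed
qed

lemma ct_iff: "partition_shape T \<Longrightarrow> i < ct T j \<longleftrightarrow> i < length T \<and> j < length (T ! i)"
  unfolding ct_def
  by (rule filter_dc) (meson less_le_trans ps_mono)

lemma le_of_iff: "(\<And>i. i < (a::nat) \<Longrightarrow> i < b) \<Longrightarrow> a \<le> b"
  using not_le by blast

lemma eq_of_iff: "(\<And>i. i < (a::nat) \<longleftrightarrow> i < b) \<Longrightarrow> a = b"
  by (meson le_antisym le_of_iff)

lemma tlen: "length (transp_tab T) = (if T = [] then 0 else length (T ! 0))"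
  by (simp add: transp_tab_def hd_conv_nth)

lemma trow: "j < length (transp_tab T) \<Longrightarrow> transp_tab T ! j = map (\<lambda>i. T ! i ! j) [0..<ct T j]"
  by (simp add: transp_tab_def ct_def)

lemma tcell:
  assumes ps: "partition_shape T"
  shows "(j < length (transp_tab T) \<and> i < length (transp_tab T ! j)) \<longleftrightarrow> (i < length T \<and> j < length (T ! i))"
proof
  assume a: "j < length (transp_tab T) \<and> i < length (transp_tab T ! j)"
  then show "i < length T \<and> j < length (T ! i)" using trow[of j T] ct_iff[OF ps] by simp
next
  assume a: "i < length T \<and> j < length (T ! i)"
  then have "T \<noteq> []" by auto
  moreover have "j < length (T ! 0)" using a ps_mono[OF ps, of 0 i] by simp
  ultimately have "j < length (transp_tab T)" by (simp add: tlen)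
  then show "j < length (transp_tab T) \<and> i < length (transp_tab T ! j)" using trow[of j T] ct_iff[OF ps] a by simp
qed

lemma tent: "partition_shape T \<Longrightarrow> i < length T \<Longrightarrow> j < length (T ! i) \<Longrightarrow> transp_tab T ! j ! i = T ! i ! j"
  using tcell[of T j i] trow[of j T] by simp

lemma tps: assumes ps: "partition_shape T" shows "partition_shape (transp_tab T)"
  unfolding partition_shape_def
proof (intro conjI allI impI ballI)
  fix r assume "r \<in> set (transp_tab T)"
  then obtain j where j: "j < length (transp_tab T)" "r = transp_tab T ! j" by (metis in_set_conv_nth)
  then have "T \<noteq> []" "j < length (T ! 0)" by (auto simp: tlen split: if_splits)
  then have "0 < length (transp_tab T ! j)" using tcell[OF ps, of j 0] j by simp
  then show "r \<noteq> []" using j by auto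
next
  fix j assume j: "Suc j < length (transp_tab T)"
  have "i < length (transp_tab T ! j)" if "i < length (transp_tab T ! Suc j)" for i
    using tcell[OF ps, of "Suc j" i] tcell[OF ps, of j i] that j by simp
  then show "length (transp_tab T ! Suc j) \<le> length (transp_tab T ! j)" by (rule le_of_iff)
qed

lemma tcells: "partition_shape T \<Longrightarrow> cells (transp_tab T) = prod.swap ` cells T"
proof (intro set_eqI iffI)
  fix x assume "partition_shape T" "x \<in> cells (transp_tab T)"
  then show "x \<in> prod.swap ` cells T" using tcell[of T "fst x" "snd x"]
    by (cases x) (auto simp: cells_iff image_iff intro!: bexI[of _ "(snd x, fst x)"])
next
  fix x assume "partition_shape T" "x \<in> prod.swap ` cells T"
  then show "x \<in> cells (transp_tab T)" using tcell[of T "fst x" "snd x"] by (auto simp: cells_iff)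
qed

lemma ttrans: assumes ps: "partition_shape T" shows "transp_tab (transp_tab T) = T"
proof -
  have ps': "partition_shape (transp_tab T)" by (rule tps[OF ps])
  have len: "length (transp_tab (transp_tab T)) = length T"
  proof (cases "T = []")
    case True then show ?thesis by (simp add: transp_tab_def)
  next
    case False
    then have "0 < length (T ! 0)" using ps ps_nonempty by blast
    then have "0 < length (transp_tab T)" using False by (simp add: tlen)
    then have tne: "transp_tab T \<noteq> []" by auto
    have "length (transp_tab T ! 0) = length T"
    proof (rule eq_of_iff)
      fix i show "i < length (transp_tab T ! 0) \<longleftrightarrow> i < length T"
        using tcell[OF ps, of 0 i] tne ps_nonempty[OF ps, of i] by auto
    qed
    then show ?thesis using tne by (simp add: tlen)
  qed
  show ?thesis
  proof (rule nth_equalityI)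
    show "length (transp_tab (transp_tab T)) = length T" by (rule len)
  next
    fix i assume "i < length (transp_tab (transp_tab T))"
    then have i: "i < length T" using len by simp
    have c: "ct (transp_tab T) i = length (T ! i)"
    proof (rule eq_of_iff)
      fix j show "j < ct (transp_tab T) i \<longleftrightarrow> j < length (T ! i)"
        using ct_iff[OF ps', of j i] tcell[OF ps, of j i] i by auto
    qed
    have "transp_tab (transp_tab T) ! i = map (\<lambda>j. transp_tab T ! j ! i) [0..<length (T ! i)]"
      using trow[of i "transp_tab T"] len i c by simp
    also have "\<dots> = map (\<lambda>j. T ! i ! j) [0..<length (T ! i)]"
      using tent[OF ps i] by simp
    also have "\<dots> = T ! i" by (simp add: map_nth)
    finally show "transp_tab (transp_tab T) ! i = T ! i" .
  qed
qed

lemma tstd: assumes std: "standard T" shows "standard (transp_tab T)"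
proof -
  have ps: "partition_shape T" using std by (simp add: standard_def)
  have ps': "partition_shape (transp_tab T)" by (rule tps[OF ps])
  have ce: "cells (transp_tab T) = prod.swap ` cells T" by (rule tcells[OF ps])
  have en: "\<And>x. x \<in> cells T \<Longrightarrow> (ent (transp_tab T) \<circ> prod.swap) x = ent T x"
    using tent[OF ps] by (auto simp: cells_iff)
  have deg': "deg (transp_tab T) = deg T"
    using card_cells[of T] card_cells[of "transp_tab T"] ce card_image[of prod.swap "cells T"] by simp
  have set': "set (rw (transp_tab T)) = set (rw T)"
  proof -
    have "set (rw (transp_tab T)) = (ent (transp_tab T) \<circ> prod.swap) ` cells T"
      by (simp add: set_rw ce image_comp)
    also have "\<dots> = ent T ` cells T" using en by (rule image_cong[OF refl])
    finally show ?thesis by (simp add: set_rw)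
  qed
  have dist': "distinct (rw (transp_tab T))"
  proof -
    have "inj_on (ent T) (cells T)" using std distinct_rw by (simp add: standard_def)
    then have "inj_on (ent (transp_tab T) \<circ> prod.swap) (cells T)" using en inj_on_cong by blast
    then have "inj_on (ent (transp_tab T)) (prod.swap ` cells T)"
    proof -
      have isw: "inj_on prod.swap (cells T)" by (rule inj_onI) auto
      show ?thesis using comp_inj_on_iff[OF isw, of "ent (transp_tab T)"] \<open>inj_on (ent (transp_tab T) \<circ> prod.swap) (cells T)\<close> by blast
    qed
    then show ?thesis using distinct_rw ce by simp
  qed
  have rows: "sorted_wrt (<) (transp_tab T ! j)" if j: "j < length (transp_tab T)" for j
  proof -
    have "transp_tab T ! j ! i < transp_tab T ! j ! Suc i" if i: "Suc i < length (transp_tab T ! j)" for i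
    proof -
      have a: "Suc i < length T" "j < length (T ! Suc i)" using tcell[OF ps, of j "Suc i"] j i by auto
      then have "j < length (T ! i)" using ps_mono[OF ps, of i "Suc i"] by simp
      then have "transp_tab T ! j ! i = T ! i ! j" using tent[OF ps] a by simp
      moreover have "transp_tab T ! j ! Suc i = T ! Suc i ! j" using tent[OF ps] a by simp
      moreover have "T ! i ! j < T ! Suc i ! j" using std a unfolding standard_def by blast
      ultimately show ?thesis by simp
    qed
    then show ?thesis by (simp add: sorted_wrt_iff_nth_Suc_transp)
  qed
  have cols: "transp_tab T ! j ! i < transp_tab T ! Suc j ! i"
    if "Suc j < length (transp_tab T)" "i < length (transp_tab T ! Suc j)" for j i
  proof -
    have a: "i < length T" "Suc j < length (T ! i)" using tcell[OF ps, of "Suc j" i] that by auto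
    have "sorted_wrt (<) (T ! i)" using std a unfolding standard_def by blast
    then have "T ! i ! j < T ! i ! Suc j" using a sorted_wrt_nth_less by fastforce
    then show ?thesis using tent[OF ps] a by simp
  qed
  show ?thesis unfolding standard_def
    using ps' rows cols dist' set' deg' std unfolding standard_def by simp
qed

lemma tdeg: "partition_shape T \<Longrightarrow> deg (transp_tab T) = deg T"
  using card_cells[of T] card_cells[of "transp_tab T"] tcells[of T] card_image[of prod.swap "cells T"] by simp



theorem mainTheorem13:
  fixes T1 T2 T1' T2' :: tab
  assumes "standard T1" and "standard T2"
    and "T1' \<in> B0 T1" and "T2' \<in> B1 T2"
  shows "Bstar0 T1' = Some T1 \<and> Bstar1 T2' = Some T2"
proof -
  have P1: "Bstar0 T1' = Some T1" using B0_main[OF assms(1) assms(3)] by simp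
  obtain X where X: "X \<in> B0 (transp_tab T2)" and T2': "T2' = transp_tab X"
    using assms(4) unfolding B1_def by blast
  have ps2: "partition_shape T2" using assms(2) by (simp add: standard_def)
  have st2: "standard (transp_tab T2)" by (rule tstd[OF assms(2)])
  have BX: "Bstar0 X = Some (transp_tab T2)" and sX: "standard X" and l0: "0 < length X"
    and l1: "1 < length (X ! 0)" and x00: "X ! 0 ! 0 = 1" and x01: "X ! 0 ! 1 = 2"
    using B0_main[OF st2 X] by auto
  have psX: "partition_shape X" using sX by (simp add: standard_def)
  define Y where "Y = transp_tab X"
  have sY: "standard Y" using tstd[OF sX] Y_def by simp
  have psY: "partition_shape Y" using sY by (simp add: standard_def)
  have dY: "deg Y = deg X" using tdeg[OF psX] Y_def by simp
  have "length (X ! 0) \<le> deg X"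
    using elem_le_sum_list[of 0 "map length X"] l0 by (simp add: deg_sum)
  then have d2: "2 \<le> deg Y" using l1 dY by simp
  have c10: "1 < length Y \<and> 0 < length (Y ! 1)" using tcell[OF psX, of 1 0] l0 l1 Y_def by simp
  have c00: "0 < length Y \<and> 0 < length (Y ! 0)" using tcell[OF psX, of 0 0] l0 l1 Y_def
    by (metis less_trans zero_less_one)
  have y10: "Y ! 1 ! 0 = 2" using tent[OF psX, of 0 1] l0 l1 x01 Y_def by simp
  have l0': "0 < length (X ! 0)" by (rule less_trans[OF zero_less_one l1])
  have y00: "Y ! 0 ! 0 = 1" using tent[OF psX l0 l0'] x00 Y_def by simp
  define sh where "sh = map length Y"
  have r1: "rw Y ! posn sh 1 0 = 2" using rw_nth[of 1 Y 0] c10 y10 sh_def by simp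
  have r0: "rw Y ! posn sh 0 0 = 1" using rw_nth[of 0 Y 0] c00 y00 sh_def by simp
  have lt: "posn sh 1 0 < posn sh 0 0" using posn_less_row[of 0 1 sh 0 0] c10 sh_def by simp
  have bd: "posn sh 0 0 < length (rw Y)"
    using posn_bound[of 0 sh 0] c00 sh_def deg_sum[of Y] by (simp add: deg_def)
  have prec: "precedes 2 1 (rw Y)" unfolding precedes_def using r1 r0 lt bd by blast
  have "Bstar1 Y = map_option transp_tab (Bstar0 (transp_tab Y))"
    unfolding Bstar1_def using sY d2 prec by simp
  also have "transp_tab Y = X" using ttrans[OF psX] Y_def by simp
  finally have "Bstar1 Y = Some (transp_tab (transp_tab T2))" using BX by simp
  then have "Bstar1 T2' = Some T2" using ttrans[OF ps2] T2' Y_def by simp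
  then show ?thesis using P1 by simp
qed

end
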